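(* Let $\lambda$ be a strict partition (distinct parts) with largest part $L$, $n\ge1$, $\sigma\in\operatorname{Tab}(\lambda,n)$, and $M=(M^{(L)},\dots,M^{(1)})$ the multiline diagram with $M^{(r)}$ having the particle of label $\lambda_j$ at position $\sigma(r,j)$ for each cell $(r,j)$. Then $$\prod_{u\in\operatorname{dg}(\lambda)}x_{\sigma(u)}\cdot t^{\sum_{r=2}^L R(M^{(r)},M^{(r-1)})}=t^{\operatorname{quinv}(\sigma)}\prod_{u\in\operatorname{dg}(\lambda)}x_{\sigma(u)},$$ i.e. $\sum_{r=2}^L R(M^{(r)},M^{(r-1)})=\operatorname{quinv}(\sigma)$.
   Context: Fillings: $\operatorname{dg}(\lambda)=\{(r,i):1\le i\le\ell(\lambda),1\le r\le\lambda_i\}$ (row $r$ from the bottom, column $i$ from the left); $\operatorname{Tab}(\lambda,n)$ = maps $\sigma:\operatorname{dg}(\lambda)\to[n]$. $\mathcal Q$ = set of integer triples $(a,b,c)$ with $a<b<c$, or $b<c<a$, or $c<b<a$, or $a=b\ne c$. With $\sigma(\lambda_i+1,i):=0$, $\operatorname{quinv}(\sigma)$ = number of pairs of cells $(r,i),(r,j)$, $i<j$, with $(\sigma(r+1,i),\sigma(r,i),\sigma(r,j))\in\mathcal Q$. Multiline diagram: for each row $r\in[L]$, $M^{(r)}$ places the particles with labels $\{\lambda_i:\lambda_i\ge r\}$ at positions in $[n]$; $p_s(M^{(r)})$ denotes the position of the particle of label $s$ in row $r$. Cyclic betweenness: for $a,b,c\in[n]$, "$a<b<c$" (cyclically) means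 $b$ lies strictly between $a$ and $c$ when reading $1,\dots,n$ clockwise around a circle from $a$ to $c$, including the case $a=c\ne b$. The number of refusals is $R(M^{(r)},M^{(r-1)})=\#\{(s,q): s$ a label in row $r$, $q$ a label in row $r-1$, $q<s$, and cyclically $p_s(M^{(r-1)})<p_q(M^{(r-1)})<p_s(M^{(r)})\}$. *)

theory Defs
  imports Main
begin

text \<open>A partition is a list of parts lam = [lam_1, ..., lam_l]; column i (1-based)
  has lam ! (i - 1) cells.  Cells are pairs (r, i): row r from the bottom, column i.\<close>

definition dg :: "nat list \<Rightarrow> (nat \<times> nat) set" where
  "dg lam = {(r, i). 1 \<le> i \<and> i \<le> length lam \<and> 1 \<le> r \<and> r \<le> lam ! (i - 1)}"

definition Tab :: "nat list \<Rightarrow> nat \<Rightarrow> (nat \<times> nat \<Rightarrow> nat) set" where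
  "Tab lam n = {\<sigma>. \<forall>u \<in> dg lam. \<sigma> u \<in> {1..n}}"

definition inQ :: "nat \<Rightarrow> nat \<Rightarrow> nat \<Rightarrow> bool" where
  "inQ a b c \<longleftrightarrow> (a < b \<and> b < c) \<or> (b < c \<and> c < a) \<or> (c < a \<and> a < b) \<or> (a = b \<and> b \<noteq> c)"

definition sigma_ext :: "nat list \<Rightarrow> (nat \<times> nat \<Rightarrow> nat) \<Rightarrow> nat \<times> nat \<Rightarrow> nat" where
  "sigma_ext lam \<sigma> u = (if u \<in> dg lam then \<sigma> u else 0)"

definition quinv :: "nat list \<Rightarrow> (nat \<times> nat \<Rightarrow> nat) \<Rightarrow> nat" where
  "quinv lam \<sigma> = card {((r, i), (r', j)). (r, i) \<in> dg lam \<and> (r', j) \<in> dg lam \<and> r' = r \<and> i < j \<and>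
      inQ (sigma_ext lam \<sigma> (r + 1, i)) (\<sigma> (r, i)) (\<sigma> (r, j))}"

text \<open>Cyclic betweenness on positions 1..n: b lies strictly between a and c reading
  clockwise from a to c (including a = c ~= b).\<close>
definition cyc_between :: "nat \<Rightarrow> nat \<Rightarrow> nat \<Rightarrow> nat \<Rightarrow> bool" where
  "cyc_between n a b c \<longleftrightarrow>
     (if a = c then b \<noteq> a
      else b \<noteq> a \<and> b \<noteq> c \<and> (b + n - a) mod n < (c + n - a) mod n)"

text \<open>A row of a multiline diagram: partial map from particle labels to positions.\<close>
type_synonym mlrow = "nat \<Rightarrow> nat option"

definition refusals :: "nat \<Rightarrow> mlrow \<Rightarrow> mlrow \<Rightarrow> nat" where
  "refusals n M M' = card {(s, q). s \<in> dom M \<and> q \<in> dom M' \<and> q < s \<and>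
      cyc_between n (the (M' s)) (the (M' q)) (the (M s))}"

definition col_of :: "nat list \<Rightarrow> nat \<Rightarrow> nat" where
  "col_of lam s = (THE j. 1 \<le> j \<and> j \<le> length lam \<and> lam ! (j - 1) = s)"

definition mld :: "nat list \<Rightarrow> (nat \<times> nat \<Rightarrow> nat) \<Rightarrow> nat \<Rightarrow> mlrow" where
  "mld lam \<sigma> r = (\<lambda>s. if s \<in> set lam \<and> 1 \<le> r \<and> r \<le> s then Some (\<sigma> (r, col_of lam s)) else None)"

end

theory Submission
  imports Defs
begin

lemma mod_shift:
  fixes y n z :: nat
  assumes "1 \<le> y" "y \<le> n" "1 \<le> z" "z \<le> n"
  shows "(z + n - y) mod n = (if y \<le> z then z - y else z + n - y)"
proof (cases "y \<le> z")
  case True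
  then have "z + n - y = (z - y) + n" by arith
  moreover have "z - y < n" using assms by simp
  ultimately have "(z + n - y) mod n = z - y" by (metis mod_add_self2 mod_less)
  then show ?thesis using True by simp
next
  case False
  then show ?thesis using assms by simp
qed

lemma cyc_inQ:
  assumes "x \<in> {1..n}" "y \<in> {1..n}" "z \<in> {1..n}"
  shows "cyc_between n y z x \<longleftrightarrow> inQ x y z"
  using assms mod_shift[of y n z] mod_shift[of y n x]
  unfolding cyc_between_def inQ_def by auto

theorem lemma9:
  fixes lam :: "nat list" and n L :: nat and \<sigma> :: "nat \<times> nat \<Rightarrow> nat"
  assumes strict: "sorted_wrt (>) lam"
    and pos: "0 \<notin> set lam"
    and ne: "lam \<noteq> []"
    and L: "L = Max (set lam)"
    and n: "n \<ge> 1"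
    and tab: "\<sigma> \<in> Tab lam n"
  shows "(\<Sum>r = 2..L. refusals n (mld lam \<sigma> r) (mld lam \<sigma> (r - 1))) = quinv lam \<sigma>"
proof -
  have lt: "\<And>a b. a < b \<Longrightarrow> b < length lam \<Longrightarrow> lam ! b < lam ! a"
    using strict sorted_wrt_nth_less by blast
  have inj: "\<And>a b. a < length lam \<Longrightarrow> b < length lam \<Longrightarrow> lam ! a = lam ! b \<Longrightarrow> a = b"
    by (metis lt linorder_neqE_nat less_irrefl)
  have ord: "\<And>a b. a < length lam \<Longrightarrow> b < length lam \<Longrightarrow> lam ! b < lam ! a \<Longrightarrow> a < b"
    by (metis lt linorder_neqE_nat less_asym less_irrefl)
  have col: "\<And>i. 1 \<le> i \<Longrightarrow> i \<le> length lam \<Longrightarrow> col_of lam (lam ! (i - 1)) = i"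
  proof -
    fix i assume i: "1 \<le> i" "i \<le> length lam"
    show "col_of lam (lam ! (i - 1)) = i"
      unfolding col_of_def
    proof (rule the_equality)
      show "1 \<le> i \<and> i \<le> length lam \<and> lam ! (i - 1) = lam ! (i - 1)" using i by simp
      fix j assume "1 \<le> j \<and> j \<le> length lam \<and> lam ! (j - 1) = lam ! (i - 1)"
      then have "j - 1 = i - 1" using inj[of "j-1" "i-1"] i by auto
      then show "j = i" using i \<open>1 \<le> j \<and> _\<close> by arith
    qed
  qed
  have setlam: "\<And>s. s \<in> set lam \<longleftrightarrow> (\<exists>i. 1 \<le> i \<and> i \<le> length lam \<and> lam ! (i - 1) = s)"
    by (metis in_set_conv_nth One_nat_def Suc_leI Suc_pred diff_Suc_1 le_add1 less_Suc_eq_le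
        less_imp_le_nat plus_1_eq_Suc zero_less_Suc diff_less zero_less_one order_less_le_trans)
  have sig: "\<And>u. u \<in> dg lam \<Longrightarrow> \<sigma> u \<in> {1..n}" using tab unfolding Tab_def by blast
  have maxle: "\<And>s. s \<in> set lam \<Longrightarrow> s \<le> L" using L by simp
  define R where "R r = {(s, q). s \<in> dom (mld lam \<sigma> r) \<and> q \<in> dom (mld lam \<sigma> (r - 1)) \<and> q < s \<and>
      cyc_between n (the (mld lam \<sigma> (r - 1) s)) (the (mld lam \<sigma> (r - 1) q)) (the (mld lam \<sigma> r s))}" for r
  define Q where "Q = {((r, i), (r', j)). (r, i) \<in> dg lam \<and> (r', j) \<in> dg lam \<and> r' = r \<and> i < j \<and>
      inQ (sigma_ext lam \<sigma> (r + 1, i)) (\<sigma> (r, i)) (\<sigma> (r, j))}"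
  define f where "f = (\<lambda>((r::nat, i::nat), (r'::nat, j::nat)). (r + 1, (lam ! (i - 1), lam ! (j - 1))))"
  have finR: "\<And>r. finite (R r)"
  proof -
    fix r have "R r \<subseteq> set lam \<times> set lam" unfolding R_def mld_def by (auto split: if_splits)
    then show "finite (R r)" by (rule finite_subset) simp
  qed
  have bij: "bij_betw f Q (Sigma {2..L} R)"
  proof (rule bij_betw_imageI)
    show "inj_on f Q"
    proof (rule inj_onI)
      fix p1 p2 assume p1: "p1 \<in> Q" and p2: "p2 \<in> Q" and eq: "f p1 = f p2"
      obtain r i r' j where a: "p1 = ((r, i), (r', j))" by (metis prod.exhaust)
      obtain r2 i2 r2' j2 where b: "p2 = ((r2, i2), (r2', j2))" by (metis prod.exhaust)
      from p1 p2 eq a b have "r = r2" "r' = r" "r2' = r2"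
        "lam ! (i - 1) = lam ! (i2 - 1)" "lam ! (j - 1) = lam ! (j2 - 1)"
        "1 \<le> i" "i \<le> length lam" "1 \<le> j" "j \<le> length lam"
        "1 \<le> i2" "i2 \<le> length lam" "1 \<le> j2" "j2 \<le> length lam"
        unfolding Q_def f_def dg_def by auto
      then have "i - 1 = i2 - 1" "j - 1 = j2 - 1" using inj[of "i-1" "i2-1"] inj[of "j-1" "j2-1"] by auto
      then have "i = i2" "j = j2" using \<open>1 \<le> i\<close> \<open>1 \<le> i2\<close> \<open>1 \<le> j\<close> \<open>1 \<le> j2\<close> by arith+
      then show "p1 = p2" using a b \<open>r = r2\<close> \<open>r' = r\<close> \<open>r2' = r2\<close> \<open>1 \<le> i\<close> \<open>1 \<le> i2\<close> \<open>1 \<le> j\<close> \<open>1 \<le> j2\<close> by simp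
    qed
    show "f ` Q = Sigma {2..L} R"
    proof
      show "f ` Q \<subseteq> Sigma {2..L} R"
      proof
        fix y assume "y \<in> f ` Q"
        then obtain r i j where p: "((r, i), (r, j)) \<in> Q" and y: "y = (r + 1, (lam ! (i - 1), lam ! (j - 1)))"
          unfolding Q_def f_def by auto
        from p have c: "(r, i) \<in> dg lam" "(r, j) \<in> dg lam" "i < j"
          and q: "inQ (sigma_ext lam \<sigma> (r + 1, i)) (\<sigma> (r, i)) (\<sigma> (r, j))" unfolding Q_def by auto
        from c have ij: "1 \<le> i" "i \<le> length lam" "1 \<le> j" "j \<le> length lam" "1 \<le> r"
          "r \<le> lam ! (i - 1)" "r \<le> lam ! (j - 1)" unfolding dg_def by auto
        have ltij: "lam ! (j - 1) < lam ! (i - 1)" using lt[of "i-1" "j-1"] ij c by simp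
        have up: "(r + 1, i) \<in> dg lam" using ij ltij unfolding dg_def by simp
        have si: "lam ! (i - 1) \<in> set lam" "lam ! (j - 1) \<in> set lam" using setlam ij by blast+
        have "r + 1 \<le> L" using maxle[OF si(1)] ij ltij by simp
        moreover have "(lam ! (i - 1), lam ! (j - 1)) \<in> R (r + 1)"
          unfolding R_def mld_def using si ij ltij col[of i] col[of j]
            q sig[OF up] sig[OF c(1)] sig[OF c(2)] cyc_inQ up
          by (auto simp: dom_def sigma_ext_def)
        ultimately show "y \<in> Sigma {2..L} R" using y ij by simp
      qed
      show "Sigma {2..L} R \<subseteq> f ` Q"
      proof
        fix y assume "y \<in> Sigma {2..L} R"
        then obtain r s q where y: "y = (r, (s, q))" and r: "2 \<le> r" "r \<le> L" and sq: "(s, q) \<in> R r"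
          by auto
        from sq have s: "s \<in> set lam" "r \<le> s" and qq: "q \<in> set lam" "r - 1 \<le> q" and qs: "q < s"
          and cy: "cyc_between n (the (mld lam \<sigma> (r - 1) s)) (the (mld lam \<sigma> (r - 1) q)) (the (mld lam \<sigma> r s))"
          unfolding R_def mld_def by (auto simp: dom_def split: if_splits)
        obtain i where i: "1 \<le> i" "i \<le> length lam" "lam ! (i - 1) = s" using setlam s by blast
        obtain j where j: "1 \<le> j" "j \<le> length lam" "lam ! (j - 1) = q" using setlam qq by blast
        have "i - 1 < j - 1" using ord[of "i-1" "j-1"] i j qs by simp
        then have ij: "i < j" using i j by arith
        have c1: "(r - 1, i) \<in> dg lam" "(r - 1, j) \<in> dg lam" "(r, i) \<in> dg lam"
          using i j r s qq qs unfolding dg_def by auto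
        have cy2: "cyc_between n (\<sigma> (r - 1, i)) (\<sigma> (r - 1, j)) (\<sigma> (r, i))"
        proof -
          have "Suc 0 \<le> r - Suc 0" "r - Suc 0 \<le> s" using r s by auto
          then show ?thesis
            using cy s qq r unfolding mld_def using col[OF i(1,2)] col[OF j(1,2)] i j by simp
        qed
        have "inQ (sigma_ext lam \<sigma> (r - 1 + 1, i)) (\<sigma> (r - 1, i)) (\<sigma> (r - 1, j))"
          using cy2 cyc_inQ sig[OF c1(1)] sig[OF c1(2)] sig[OF c1(3)] c1 r
          by (simp add: sigma_ext_def)
        then have "((r - 1, i), (r - 1, j)) \<in> Q" unfolding Q_def using c1 ij by simp
        moreover have "f ((r - 1, i), (r - 1, j)) = y" unfolding f_def using y i j r by simp
        ultimately show "y \<in> f ` Q" by force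
      qed
    qed
  qed
  have "quinv lam \<sigma> = card Q" unfolding quinv_def Q_def by simp
  also have "\<dots> = card (Sigma {2..L} R)" using bij by (rule bij_betw_same_card)
  also have "\<dots> = (\<Sum>r = 2..L. card (R r))" using finR by simp
  also have "\<dots> = (\<Sum>r = 2..L. refusals n (mld lam \<sigma> r) (mld lam \<sigma> (r - 1)))"
    unfolding R_def refusals_def by simp
  finally show ?thesis by simp
qed

end
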